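(* Let $\mathcal{M}=((X,\mathcal{C}),\mathcal{V})$ be a closure model. Then the relation $\equiv_{IML}$ is a closure bisimulation relation.
   Context: A closure space is $(X,\mathcal{C})$ with $X$ non-empty, $\mathcal{C}(\emptyset)=\emptyset$, $A\subseteq\mathcal{C}(A)$, $\mathcal{C}(A_1\cup A_2)=\mathcal{C}(A_1)\cup\mathcal{C}(A_2)$; interior $\mathcal{I}(A)=X\setminus\mathcal{C}(X\setminus A)$. A closure model adds $\mathcal{V}:AP\to\mathcal{P}(X)$; $\mathcal{V}^{-1}(x)=\{p\in AP\mid x\in\mathcal{V}(p)\}$. IML formulas: $\Phi::=p\mid\neg\Phi\mid\bigwedge_{i\in I}\Phi_i\mid\mathcal{N}\Phi$ ($I$ any set); $x\models p$ iff $x\in\mathcal{V}(p)$, negation and conjunction standard, $x\models\mathcal{N}\Phi$ iff $x\in\mathcal{C}(\{y\mid y\models\Phi\})$. $x_1\equiv_{IML}x_2$ iff they satisfy the same IML formulas. Closure bisimulation: a non-empty equivalence relation $B$ on $X$ such that whenever $(x_1,x_2)\in B$: (1) $\mathcal{V}^{-1}(x_1)=\mathcal{V}^{-1}(x_2)$; (2) for every $X_1\subseteq X$ with $x_1\in\mathcal{I}(X_1)$ there is $X_2\subseteq X$ with $x_2\in\mathcal{I}(X_2)$ such that for every $x_2'\in X_2$ there exists $x_1'\in X_1$ with $(x_1',x_2')\in B$. *)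

theory Defs
  imports Main
begin

text \<open>Closure spaces. The carrier X is the whole (nonempty) type 'x.\<close>
definition closure_space :: "('x set \<Rightarrow> 'x set) \<Rightarrow> bool" where
  "closure_space C \<longleftrightarrow>
     C {} = {} \<and>
     (\<forall>A. A \<subseteq> C A) \<and>
     (\<forall>A1 A2. C (A1 \<union> A2) = C A1 \<union> C A2)"

definition interior_op :: "('x set \<Rightarrow> 'x set) \<Rightarrow> 'x set \<Rightarrow> 'x set" where
  "interior_op C A = - C (- A)"

definition val_inv :: "('ap \<Rightarrow> 'x set) \<Rightarrow> 'x \<Rightarrow> 'ap set" where
  "val_inv V x = {p. x \<in> V p}"

datatype ('ap, 'i) iml =
    Atom 'ap
  | Neg "('ap, 'i) iml"
  | Conj "'i set" "'i \<Rightarrow> ('ap, 'i) iml"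
  | Near "('ap, 'i) iml"

primrec iml_ext :: "('x set \<Rightarrow> 'x set) \<Rightarrow> ('ap \<Rightarrow> 'x set) \<Rightarrow> ('ap, 'i) iml \<Rightarrow> 'x set" where
  "iml_ext C V (Atom p) = V p"
| "iml_ext C V (Neg \<phi>) = - iml_ext C V \<phi>"
| "iml_ext C V (Conj I f) = {x. \<forall>i\<in>I. x \<in> iml_ext C V (f i)}"
| "iml_ext C V (Near \<phi>) = C (iml_ext C V \<phi>)"

definition iml_sat :: "('x set \<Rightarrow> 'x set) \<Rightarrow> ('ap \<Rightarrow> 'x set) \<Rightarrow> 'x \<Rightarrow> ('ap, 'i) iml \<Rightarrow> bool" where
  "iml_sat C V x \<phi> \<longleftrightarrow> x \<in> iml_ext C V \<phi>"

text \<open>Logical equivalence; conjunctions are indexed by 'x set, which suffices for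
  arbitrary index sets (any conjunction is semantically a conjunction over at most
  |P(X)| distinct conjuncts).\<close>
definition iml_equiv :: "('x set \<Rightarrow> 'x set) \<Rightarrow> ('ap \<Rightarrow> 'x set) \<Rightarrow> ('x \<times> 'x) set" where
  "iml_equiv C V =
     {(x1, x2). \<forall>\<phi> :: ('ap, 'x set) iml. iml_sat C V x1 \<phi> \<longleftrightarrow> iml_sat C V x2 \<phi>}"

definition closure_bisim :: "('x set \<Rightarrow> 'x set) \<Rightarrow> ('ap \<Rightarrow> 'x set) \<Rightarrow> ('x \<times> 'x) set \<Rightarrow> bool" where
  "closure_bisim C V B \<longleftrightarrow>
     B \<noteq> {} \<and> equiv UNIV B \<and>
     (\<forall>(x1, x2)\<in>B.
        val_inv V x1 = val_inv V x2 \<and>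
        (\<forall>X1. x1 \<in> interior_op C X1 \<longrightarrow>
           (\<exists>X2. x2 \<in> interior_op C X2 \<and>
                 (\<forall>x2'\<in>X2. \<exists>x1'\<in>X1. (x1', x2') \<in> B))))"

end

theory Submission
  imports Defs
begin

lemma E_mem: "(a, b) \<in> iml_equiv C V \<longleftrightarrow>
  (\<forall>\<phi> :: ('ap, 'x set) iml. a \<in> iml_ext C V \<phi> \<longleftrightarrow> b \<in> iml_ext C V \<phi>)"
  for C :: "'x set \<Rightarrow> 'x set" and V :: "'ap \<Rightarrow> 'x set"
  by (simp add: iml_equiv_def iml_sat_def)

lemma class_formula:
  fixes C :: "'x set \<Rightarrow> 'x set" and V :: "'ap \<Rightarrow> 'x set" and y :: 'x
  shows "\<exists>\<chi> :: ('ap, 'x set) iml. iml_ext C V \<chi> = {x. (y, x) \<in> iml_equiv C V}"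
proof -
  let ?E = "iml_equiv C V"
  define \<psi> where "\<psi> z = (SOME \<phi> :: ('ap, 'x set) iml. y \<in> iml_ext C V \<phi> \<and> z \<notin> iml_ext C V \<phi>)" for z
  have psi: "y \<in> iml_ext C V (\<psi> z) \<and> z \<notin> iml_ext C V (\<psi> z)" if "(y, z) \<notin> ?E" for z
  proof -
    from that obtain \<phi> :: "('ap, 'x set) iml" where "\<not> (y \<in> iml_ext C V \<phi> \<longleftrightarrow> z \<in> iml_ext C V \<phi>)"
      unfolding E_mem by blast
    then have "\<exists>\<phi> :: ('ap, 'x set) iml. y \<in> iml_ext C V \<phi> \<and> z \<notin> iml_ext C V \<phi>"
      by (metis ComplD ComplI iml_ext.simps(2))
    then show ?thesis unfolding \<psi>_def by (rule someI_ex)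
  qed
  define \<chi> where "\<chi> = Conj {{z} | z. (y, z) \<notin> ?E} (\<lambda>s. \<psi> (the_elem s))"
  have "iml_ext C V \<chi> = {x. (y, x) \<in> ?E}"
  proof (intro set_eqI iffI)
    fix x assume "x \<in> iml_ext C V \<chi>"
    then have h: "\<forall>i\<in>{{z} | z. (y, z) \<notin> ?E}. x \<in> iml_ext C V (\<psi> (the_elem i))"
      unfolding \<chi>_def by simp
    show "x \<in> {x. (y, x) \<in> ?E}"
    proof (rule ccontr)
      assume "x \<notin> {x. (y, x) \<in> ?E}"
      then have n: "(y, x) \<notin> ?E" by simp
      then have "{x} \<in> {{z} | z. (y, z) \<notin> ?E}" by blast
      with h have "x \<in> iml_ext C V (\<psi> (the_elem {x}))" by blast
      then have "x \<in> iml_ext C V (\<psi> x)" by simp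
      with psi[OF n] show False by blast
    qed
  next
    fix x assume "x \<in> {x. (y, x) \<in> ?E}"
    then have "(y, x) \<in> ?E" by simp
    have "x \<in> iml_ext C V (\<psi> z)" if "(y, z) \<notin> ?E" for z
    proof -
      have "y \<in> iml_ext C V (\<psi> z)" using psi[OF that] by blast
      then show ?thesis using \<open>(y, x) \<in> ?E\<close> unfolding E_mem by blast
    qed
    then have "\<forall>i\<in>{{z} | z. (y, z) \<notin> ?E}. x \<in> iml_ext C V (\<psi> (the_elem i))"
      by auto
    then show "x \<in> iml_ext C V \<chi>"
      unfolding \<chi>_def by simp
  qed
  then show ?thesis by blast
qed

lemma closed_formula:
  fixes C :: "'x set \<Rightarrow> 'x set" and V :: "'ap \<Rightarrow> 'x set" and S :: "'x set"
  assumes closed: "\<And>a b. a \<in> S \<Longrightarrow> (a, b) \<in> iml_equiv C V \<Longrightarrow> b \<in> S"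
  shows "\<exists>\<Phi> :: ('ap, 'x set) iml. iml_ext C V \<Phi> = S"
proof -
  let ?E = "iml_equiv C V"
  have refl: "(a, a) \<in> ?E" for a by (simp add: E_mem)
  define \<chi> where "\<chi> y = (SOME \<chi> :: ('ap, 'x set) iml. iml_ext C V \<chi> = {x. (y, x) \<in> ?E})" for y
  have chi: "iml_ext C V (\<chi> y) = {x. (y, x) \<in> ?E}" for y
    unfolding \<chi>_def using class_formula[of C V y] by (rule someI_ex)
  define \<Phi> where "\<Phi> = Neg (Conj {{y} | y. y \<in> S} (\<lambda>s. Neg (\<chi> (the_elem s))))"
  have "iml_ext C V \<Phi> = S"
  proof (intro set_eqI iffI)
    fix x assume "x \<in> iml_ext C V \<Phi>"
    then have "\<exists>i\<in>{{y} | y. y \<in> S}. x \<in> iml_ext C V (\<chi> (the_elem i))"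
      unfolding \<Phi>_def by simp
    then obtain y where "y \<in> S" "x \<in> iml_ext C V (\<chi> y)" by auto
    then have "y \<in> S" "(y, x) \<in> ?E" by (auto simp: chi)
    then show "x \<in> S" using closed by blast
  next
    fix x assume "x \<in> S"
    have "{x} \<in> {{y} | y. y \<in> S}" using \<open>x \<in> S\<close> by blast
    moreover have "x \<in> iml_ext C V (\<chi> (the_elem {x}))" using refl by (simp add: chi)
    ultimately have "\<exists>i\<in>{{y} | y. y \<in> S}. x \<in> iml_ext C V (\<chi> (the_elem i))" by (rule bexI[rotated])
    then show "x \<in> iml_ext C V \<Phi>" unfolding \<Phi>_def by simp
  qed
  then show ?thesis by blast
qed

theorem mainTheorem15:
  fixes C :: "'x set \<Rightarrow> 'x set" and V :: "'ap \<Rightarrow> 'x set"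
  assumes "closure_space C"
  shows "closure_bisim C V (iml_equiv C V)"
proof -
  let ?E = "iml_equiv C V"
  have mono: "A \<subseteq> B \<Longrightarrow> C A \<subseteq> C B" for A B
  proof -
    assume "A \<subseteq> B"
    then have "B = A \<union> B" by blast
    moreover have "C (A \<union> B) = C A \<union> C B" using assms unfolding closure_space_def by blast
    ultimately have "C B = C A \<union> C B" by simp
    then show ?thesis by blast
  qed
  have refl: "(a, a) \<in> ?E" for a by (simp add: E_mem)
  have sym: "(a, b) \<in> ?E \<Longrightarrow> (b, a) \<in> ?E" for a b by (simp add: E_mem)
  have trans: "(a, b) \<in> ?E \<Longrightarrow> (b, c) \<in> ?E \<Longrightarrow> (a, c) \<in> ?E" for a b c by (simp add: E_mem)
  have eq: "equiv UNIV ?E"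
    unfolding equiv_def refl_on_def sym_def trans_def
    using refl sym trans by (simp add: E_mem)
  have ne: "?E \<noteq> {}" using refl by blast
  have main: "val_inv V x1 = val_inv V x2 \<and>
        (\<forall>X1. x1 \<in> interior_op C X1 \<longrightarrow>
           (\<exists>X2. x2 \<in> interior_op C X2 \<and>
                 (\<forall>x2'\<in>X2. \<exists>x1'\<in>X1. (x1', x2') \<in> ?E)))"
    if e: "(x1, x2) \<in> ?E" for x1 x2
  proof
    show "val_inv V x1 = val_inv V x2"
    proof -
      have "x1 \<in> V p \<longleftrightarrow> x2 \<in> V p" for p
        using e[unfolded E_mem, rule_format, of "Atom p"] by simp
      then show ?thesis unfolding val_inv_def by blast
    qed
  next
    show "\<forall>X1. x1 \<in> interior_op C X1 \<longrightarrow>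
           (\<exists>X2. x2 \<in> interior_op C X2 \<and> (\<forall>x2'\<in>X2. \<exists>x1'\<in>X1. (x1', x2') \<in> ?E))"
    proof (intro allI impI)
      fix X1 assume i: "x1 \<in> interior_op C X1"
      define X2 where "X2 = {y. \<exists>x\<in>X1. (x, y) \<in> ?E}"
      have "\<exists>\<Phi> :: ('ap, 'x set) iml. iml_ext C V \<Phi> = - X2"
      proof (rule closed_formula)
        fix a b assume "a \<in> - X2" "(a, b) \<in> ?E"
        show "b \<in> - X2"
        proof
          assume "b \<in> X2"
          then obtain x where "x \<in> X1" "(x, b) \<in> ?E" unfolding X2_def by blast
          moreover have "(b, a) \<in> ?E" using sym[OF \<open>(a, b) \<in> ?E\<close>] .
          ultimately have "(x, a) \<in> ?E" using trans by blast
          with \<open>x \<in> X1\<close> have "a \<in> X2" unfolding X2_def by blast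
          with \<open>a \<in> - X2\<close> show False by blast
        qed
      qed
      then obtain \<Phi> :: "('ap, 'x set) iml" where phi: "iml_ext C V \<Phi> = - X2" by blast
      have sub: "X1 \<subseteq> X2" unfolding X2_def using refl by blast
      have "x1 \<notin> C (- X2)"
        using i mono[of "- X2" "- X1"] sub unfolding interior_op_def by blast
      then have "x1 \<notin> iml_ext C V (Near \<Phi>)" using phi by simp
      then have "x2 \<notin> iml_ext C V (Near \<Phi>)" using e unfolding E_mem by blast
      then have "x2 \<in> interior_op C X2" using phi by (simp add: interior_op_def)
      moreover have "\<forall>x2'\<in>X2. \<exists>x1'\<in>X1. (x1', x2') \<in> ?E" unfolding X2_def by blast
      ultimately show "\<exists>X2. x2 \<in> interior_op C X2 \<and> (\<forall>x2'\<in>X2. \<exists>x1'\<in>X1. (x1', x2') \<in> ?E)"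
        by blast
    qed
  qed
  show ?thesis unfolding closure_bisim_def using eq ne main by blast
qed

end
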